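(* Let $(U,\mathcal{S},w,k',p')$ be an instance of the maximization version of $k'$-WEC, and for $1\le i\le k'$ let $\mathcal{S}_i=\{S\in\mathcal{S}:|S|=i\}$. For each $1\le i\le k'$ let $\widehat{\mathcal{S}}_i\subseteq\mathcal{S}_i$ be a subfamily that max represents $\mathcal{S}_i$ with respect to universe $U$, integers $k'$ and $i$, and weight function $w$, and let $\widehat{\mathcal{S}}=\bigcup_{i=1}^{k'}\widehat{\mathcal{S}}_i$. Then $(U,\mathcal{S},w,k',p')$ is a yes-instance if and only if $(U,\widehat{\mathcal{S}},w,k',p')$ is a yes-instance.
   Context: Maximization version of Weighted $k'$-Exact Cover ($k'$-WEC): given a universe $U$, a family $\mathcal{S}$ of nonempty subsets of $U$, a function $w:\mathcal{S}\to\mathbb{R}$, $k'\in\mathbb{N}$ and $p'\in\mathbb{R}$, decide whether there is a subfamily $\mathcal{S}'\subseteq\mathcal{S}$ of pairwise disjoint sets with $|\bigcup\mathcal{S}'|=k'$ and $\sum_{S\in\mathcal{S}'}w(S)\ge p'$. Representation: given a universe $E$, nonnegative integers $k$ and $p$, a family $\mathcal{S}$ of subsets of $E$ of size $p$, and $w:\mathcal{S}\to\mathbb{R}$, a subfamily $\widehat{\mathcal{S}}\subseteq\mathcal{S}$ max represents $\mathcal{S}$ if for every $X\in\mathcal{S}$ and every $Y\subseteq E\setminus X$ with $|Y|\le k-p$ there is $\widehat{X}\in\widehat{\mathcal{S}}$ disjoint from $Y$ with $w(\widehat{X})\ge w(X)$. *)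

theory Defs
  imports Complex_Main "HOL-Library.Disjoint_Sets"
begin

definition wec_instance :: "'a set \<Rightarrow> 'a set set \<Rightarrow> bool" where
  "wec_instance U S \<longleftrightarrow> finite U \<and> (\<forall>X\<in>S. X \<subseteq> U \<and> X \<noteq> {})"

definition wec_yes :: "'a set \<Rightarrow> 'a set set \<Rightarrow> ('a set \<Rightarrow> real) \<Rightarrow> nat \<Rightarrow> real \<Rightarrow> bool" where
  "wec_yes U S w k' p' \<longleftrightarrow>
     (\<exists>S'. S' \<subseteq> S \<and> finite S' \<and> disjoint S' \<and> card (\<Union>S') = k' \<and> (\<Sum>X\<in>S'. w X) \<ge> p')"

text \<open>Shat max represents A w.r.t. universe E, integers k and p, weight w.
  (A is assumed to be a family of p-subsets of E.)\<close>
definition max_represents ::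
  "'a set \<Rightarrow> nat \<Rightarrow> nat \<Rightarrow> ('a set \<Rightarrow> real) \<Rightarrow> 'a set set \<Rightarrow> 'a set set \<Rightarrow> bool" where
  "max_represents E k p w A Ahat \<longleftrightarrow>
     Ahat \<subseteq> A \<and>
     (\<forall>X\<in>A. \<forall>Y. Y \<subseteq> E - X \<and> card Y \<le> k - p \<longrightarrow>
        (\<exists>Xh\<in>Ahat. Xh \<inter> Y = {} \<and> w Xh \<ge> w X))"

end

theory Submission
  imports Defs
begin

lemma replace_all:
  fixes U :: "'a set" and S T :: "'a set set" and w :: "'a set \<Rightarrow> real"
  assumes fU: "finite U" and SU: "\<forall>X\<in>S. X \<subseteq> U \<and> X \<noteq> {}" and TS: "T \<subseteq> S"
    and hyp: "\<And>X Y. X \<in> S \<Longrightarrow> 1 \<le> card X \<Longrightarrow> card X \<le> k' \<Longrightarrow> Y \<subseteq> U - X \<Longrightarrow>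
        card Y \<le> k' - card X \<Longrightarrow> \<exists>Xh\<in>T. card Xh = card X \<and> Xh \<inter> Y = {} \<and> w Xh \<ge> w X"
  shows "\<forall>S'. S' \<subseteq> S \<and> finite S' \<and> disjoint S' \<and> card (\<Union>S') = k' \<and> card (S' - T) = n
     \<longrightarrow> (\<exists>S''. S'' \<subseteq> T \<and> finite S'' \<and> disjoint S'' \<and> card (\<Union>S'') = k' \<and> sum w S'' \<ge> sum w S')"
proof (induction n)
  case 0
  show ?case
  proof (intro allI impI)
    fix S' assume a: "S' \<subseteq> S \<and> finite S' \<and> disjoint S' \<and> card (\<Union>S') = k' \<and> card (S' - T) = 0"
    then have "S' \<subseteq> T" by auto
    with a show "\<exists>S''. S'' \<subseteq> T \<and> finite S'' \<and> disjoint S'' \<and> card (\<Union>S'') = k' \<and> sum w S'' \<ge> sum w S'"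
      by blast
  qed
next
  case (Suc n)
  show ?case
  proof (intro allI impI)
    fix S' assume a: "S' \<subseteq> S \<and> finite S' \<and> disjoint S' \<and> card (\<Union>S') = k' \<and> card (S' - T) = Suc n"
    then obtain X where X: "X \<in> S'" "X \<notin> T"
      by (metis Diff_iff card_0_eq card.infinite ex_in_conv nat.distinct(1))
    have XS: "X \<in> S" using a X by auto
    have fin: "finite (\<Union>S')" using a SU fU by (meson Sup_least finite_subset subsetD)
    have XU: "X \<subseteq> \<Union>S'" using X by auto
    have fX: "finite X" using fin XU finite_subset by blast
    have c1: "1 \<le> card X" using SU XS fX by (simp add: Suc_leI card_gt_0_iff)
    have c2: "card X \<le> k'" using a card_mono[OF fin XU] by simp
    define Y where "Y = \<Union>(S' - {X})"
    have YX: "X \<inter> Y = {}" unfolding Y_def using a X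
      by (auto simp: disjoint_def disjnt_def) 
    have un: "\<Union>S' = X \<union> Y" unfolding Y_def using X by auto
    have fY: "finite Y" using fin un by auto
    have "card (\<Union>S') = card X + card Y" using un card_Un_disjoint[OF fX fY YX] by simp
    then have cY: "card Y = k' - card X" using a by linarith
    have YU: "Y \<subseteq> U - X" using YX a SU unfolding Y_def by blast
    obtain Xh where Xh: "Xh \<in> T" "card Xh = card X" "Xh \<inter> Y = {}" "w Xh \<ge> w X"
      using hyp[OF XS c1 c2 YU] cY by auto
    have Xhne: "Xh \<noteq> {}" using Xh(1) TS SU by auto
    have fXh: "finite Xh" using Xh(1) TS SU fU finite_subset by blast
    have notin: "Xh \<notin> S' - {X}"
    proof
      assume "Xh \<in> S' - {X}"
      then have "Xh \<subseteq> Y" unfolding Y_def by auto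
      with Xh(3) Xhne show False by auto
    qed
    define S1 where "S1 = insert Xh (S' - {X})"
    have S1S: "S1 \<subseteq> S" using a Xh(1) TS unfolding S1_def by auto
    have fS1: "finite S1" using a unfolding S1_def by auto
    have dS1: "disjoint S1"
    proof -
      have "\<forall>A\<in>S'. \<forall>B\<in>S'. A \<noteq> B \<longrightarrow> A \<inter> B = {}" using a by (simp add: disjoint_def)
      moreover have "\<forall>B\<in>S' - {X}. Xh \<inter> B = {}" using Xh(3) unfolding Y_def by auto
      ultimately show ?thesis unfolding S1_def disjoint_def by blast
    qed
    have un1: "\<Union>S1 = Xh \<union> Y" unfolding S1_def Y_def by auto
    have cS1: "card (\<Union>S1) = k'" using un1 card_Un_disjoint[OF fXh fY Xh(3)] Xh(2) cY c2 by simp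
    have diff: "S1 - T = (S' - T) - {X}" unfolding S1_def using Xh(1) X by auto
    have cd: "card (S1 - T) = n" using diff a X by simp
    have sum1: "sum w S1 = w Xh + sum w (S' - {X})"
      unfolding S1_def using notin a by (simp add: sum.insert)
    have sum2: "sum w S' = w X + sum w (S' - {X})"
      using a X by (simp add: sum.remove)
    obtain S'' where S'': "S'' \<subseteq> T" "finite S''" "disjoint S''" "card (\<Union>S'') = k'" "sum w S'' \<ge> sum w S1"
      using Suc.IH S1S fS1 dS1 cS1 cd by blast
    show "\<exists>S''. S'' \<subseteq> T \<and> finite S'' \<and> disjoint S'' \<and> card (\<Union>S'') = k' \<and> sum w S'' \<ge> sum w S'"
    proof (intro exI[of _ S''] conjI)
      show "sum w S'' \<ge> sum w S'" using S''(5) sum1 sum2 Xh(4) by linarith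
    qed (use S'' in auto)
  qed
qed

theorem lemma4:
  fixes U :: "'a set" and S :: "'a set set" and w :: "'a set \<Rightarrow> real"
    and k' :: nat and p' :: real and Shat :: "nat \<Rightarrow> 'a set set"
  assumes inst: "wec_instance U S"
    and rep: "\<And>i. 1 \<le> i \<Longrightarrow> i \<le> k' \<Longrightarrow>
               max_represents U k' i w {X \<in> S. card X = i} (Shat i)"
  shows "wec_yes U S w k' p' \<longleftrightarrow> wec_yes U (\<Union>i\<in>{1..k'}. Shat i) w k' p'"
proof -
  define T where "T = (\<Union>i\<in>{1..k'}. Shat i)"
  have TS: "T \<subseteq> S"
  proof
    fix X assume "X \<in> T"
    then obtain i where i: "i \<in> {1..k'}" "X \<in> Shat i" unfolding T_def by blast
    then have "Shat i \<subseteq> {X \<in> S. card X = i}" using rep[of i] unfolding max_represents_def by auto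
    then show "X \<in> S" using i by blast
  qed
  have hyp: "\<exists>Xh\<in>T. card Xh = card X \<and> Xh \<inter> Y = {} \<and> w Xh \<ge> w X"
    if h: "X \<in> S" "1 \<le> card X" "card X \<le> k'" "Y \<subseteq> U - X" "card Y \<le> k' - card X" for X Y
  proof -
    have r: "max_represents U k' (card X) w {Z \<in> S. card Z = card X} (Shat (card X))"
      using h(2,3) by (rule rep)
    have sub: "Shat (card X) \<subseteq> {Z \<in> S. card Z = card X}" and
      ex: "\<forall>Z\<in>{Z \<in> S. card Z = card X}. \<forall>Y. Y \<subseteq> U - Z \<and> card Y \<le> k' - card X \<longrightarrow>
        (\<exists>Xh\<in>Shat (card X). Xh \<inter> Y = {} \<and> w Xh \<ge> w Z)"
      using r unfolding max_represents_def by auto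
    have "X \<in> {Z \<in> S. card Z = card X}" using h(1) by simp
    then obtain Xh where Xh: "Xh \<in> Shat (card X)" "Xh \<inter> Y = {}" "w Xh \<ge> w X"
      using ex h(4,5) by blast
    have "card Xh = card X" using sub Xh(1) by blast
    moreover have "Xh \<in> T" unfolding T_def using Xh(1) h(2,3) by auto
    ultimately show ?thesis using Xh by blast
  qed
  have fU: "finite U" and SU: "\<forall>X\<in>S. X \<subseteq> U \<and> X \<noteq> {}" using inst unfolding wec_instance_def by auto
  note RA = replace_all[OF fU SU TS hyp]
  have "wec_yes U S w k' p' \<longleftrightarrow> wec_yes U T w k' p'"
  proof
    assume "wec_yes U S w k' p'"
    then obtain S' where S': "S' \<subseteq> S" "finite S'" "disjoint S'" "card (\<Union>S') = k'" "sum w S' \<ge> p'"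
      unfolding wec_yes_def by blast
    obtain S'' where S'': "S'' \<subseteq> T" "finite S''" "disjoint S''" "card (\<Union>S'') = k'" "sum w S'' \<ge> sum w S'"
    proof -
      have "S' \<subseteq> S \<and> finite S' \<and> disjoint S' \<and> card (\<Union>S') = k' \<and> card (S' - T) = card (S' - T)"
        using S' by simp
      moreover have "S' \<subseteq> S \<and> finite S' \<and> disjoint S' \<and> card (\<Union>S') = k' \<and> card (S' - T) = card (S' - T)
         \<longrightarrow> (\<exists>S''. S'' \<subseteq> T \<and> finite S'' \<and> disjoint S'' \<and> card (\<Union>S'') = k' \<and> sum w S'' \<ge> sum w S')"
        by (rule spec[OF RA])
      ultimately have "\<exists>S''. S'' \<subseteq> T \<and> finite S'' \<and> disjoint S'' \<and> card (\<Union>S'') = k' \<and> sum w S'' \<ge> sum w S'"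
        by (rule rev_mp)
      then show ?thesis using that by (elim exE conjE) blast
    qed
    have "sum w S'' \<ge> p'" using S''(5) S'(5) by linarith
    then show "wec_yes U T w k' p'" unfolding wec_yes_def using S'' by blast
  next
    assume "wec_yes U T w k' p'"
    then obtain S' where "S' \<subseteq> T" "finite S'" "disjoint S'" "card (\<Union>S') = k'" "sum w S' \<ge> p'"
      unfolding wec_yes_def by blast
    moreover have "S' \<subseteq> S" using calculation(1) TS by (rule subset_trans)
    ultimately show "wec_yes U S w k' p'" unfolding wec_yes_def by blast
  qed
  then show ?thesis unfolding T_def .
qed

end
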